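(* Let $H$ be a separable real Hilbert space with norm $\|\cdot\|$. Let $(Y,X)$ be a random pair in $H\times\mathbb{R}$ where $X$ has a probability density $p$, and let $\mu_x$ be the conditional law of $Y$ given $X=x$. Assume: (A2) $p$ is bounded and there are $\beta>0$, $C_2>0$ with $|p(x)-p(x')|\le C_2|x-x'|^\beta$ for all $x,x'\in\mathbb{R}$; (A4) each $\mu_x$ has a finite second moment and there is $C_4$ with $\mathcal{W}_2(\mu_x,\mu_{x'})\le C_4|x-x'|^\beta$ for all $x,x'$; (A6) there is $C_6$ such that $\mathbb{E}[\|Y-\alpha\|^{-2}\mid X=x]\le C_6$ for all $\alpha\in H$ and all $x$. Let $\Phi(x,\alpha)=-p(x)\,\mathbb{E}\big[\frac{Y-\alpha}{\|Y-\alpha\|}\,\big|\,X=x\big]$. Then there is a constant $C_3>0$ such that $$\|\Phi(x,\alpha)-\Phi(x',\alpha)\|\le C_3|x-x'|^\beta\quad\text{for all }x,x'\in\mathbb{R}\text{ and all }\alpha\in H.$$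
   Context: For probability measures $\mu,\nu$ on $H$ with finite second moments, $\mathcal{W}_2(\mu,\nu)=\big(\inf_\pi\int\|y-y'\|^2\,d\pi(y,y')\big)^{1/2}$, the infimum over all couplings $\pi$ of $\mu$ and $\nu$. *)

theory Defs
  imports "HOL-Probability.Probability"
begin

definition couplings :: "'a::topological_space measure \<Rightarrow> 'a measure \<Rightarrow> ('a \<times> 'a) measure set" where
  "couplings \<mu> \<nu> = {\<pi>. prob_space \<pi> \<and> sets \<pi> = sets (borel \<Otimes>\<^sub>M borel)
      \<and> distr \<pi> borel fst = \<mu> \<and> distr \<pi> borel snd = \<nu>}"

definition W2 :: "'a::{real_normed_vector, second_countable_topology} measure \<Rightarrow> 'a measure \<Rightarrow> real" where
  "W2 \<mu> \<nu> = sqrt (Inf ((\<lambda>\<pi>. \<integral>z. (norm (fst z - snd z))\<^sup>2 \<partial>\<pi>) ` couplings \<mu> \<nu>))"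

definition finite_second_moment :: "'a::real_normed_vector measure \<Rightarrow> bool" where
  "finite_second_moment \<mu> \<longleftrightarrow> prob_space \<mu> \<and> sets \<mu> = sets borel \<and> integrable \<mu> (\<lambda>y. (norm y)\<^sup>2)"

text \<open>\<Phi>(x,\<alpha>) = - p(x) E[(Y-\<alpha>)/||Y-\<alpha>|| | X=x], with \<mu> x the conditional law of Y given X = x.\<close>
definition Phi :: "(real \<Rightarrow> real) \<Rightarrow> (real \<Rightarrow> 'a::{real_normed_vector, second_countable_topology} measure)
    \<Rightarrow> real \<Rightarrow> 'a \<Rightarrow> 'a" where
  "Phi p \<mu> x \<alpha> = - (p x *\<^sub>R (\<integral>y. (1 / norm (y - \<alpha>)) *\<^sub>R (y - \<alpha>) \<partial>(\<mu> x)))"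

end

theory Submission
  imports Defs
begin

lemma unit_diff_bound:
  fixes a b :: "'a::real_normed_vector"
  assumes "a \<noteq> 0"
  shows "norm ((1 / norm a) *\<^sub>R a - (1 / norm b) *\<^sub>R b) \<le> 2 * norm (a - b) / norm a"
proof (cases "b = 0")
  case True
  then show ?thesis using assms by simp
next
  case False
  have na: "norm a > 0" using assms by simp
  have nb: "norm b > 0" using False by simp
  have eq: "(1 / norm a) *\<^sub>R a - (1 / norm b) *\<^sub>R b
      = (1 / norm a) *\<^sub>R (a - b) + (1 / norm a - 1 / norm b) *\<^sub>R b"
    by (simp add: algebra_simps)
  have "norm ((1 / norm a - 1 / norm b) *\<^sub>R b) = \<bar>1 / norm a - 1 / norm b\<bar> * norm b" by simp
  also have "\<dots> = \<bar>norm b - norm a\<bar> / norm a"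
  proof -
    have "1 / norm a - 1 / norm b = (norm b - norm a) / (norm a * norm b)"
      using na nb by (simp add: field_simps)
    then have "\<bar>1 / norm a - 1 / norm b\<bar> = \<bar>norm b - norm a\<bar> / (norm a * norm b)"
      using na nb by (simp add: abs_mult)
    then show ?thesis using na nb by simp
  qed
  also have "\<dots> \<le> norm (a - b) / norm a"
    using na by (intro divide_right_mono) (auto simp: norm_minus_commute intro: order_trans[OF norm_triangle_ineq3])
  finally have h: "norm ((1 / norm a - 1 / norm b) *\<^sub>R b) \<le> norm (a - b) / norm a" .
  have "norm ((1 / norm a) *\<^sub>R a - (1 / norm b) *\<^sub>R b)
     \<le> norm ((1 / norm a) *\<^sub>R (a - b)) + norm ((1 / norm a - 1 / norm b) *\<^sub>R b)"
    unfolding eq by (rule norm_triangle_ineq)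
  also have "\<dots> \<le> norm (a - b) / norm a + norm (a - b) / norm a"
    using h by simp
  finally show ?thesis by simp
qed

lemma unit_norm_le1:
  fixes a :: "'a::real_normed_vector"
  shows "norm ((1 / norm a) *\<^sub>R a) \<le> 1"
  by (cases "a = 0") auto

lemma pointwise_enn:
  fixes y y' \<alpha> :: "'a::real_normed_vector"
  assumes t: "t > 0"
  shows "ennreal (norm ((1 / norm (y - \<alpha>)) *\<^sub>R (y - \<alpha>) - (1 / norm (y' - \<alpha>)) *\<^sub>R (y' - \<alpha>)))
    \<le> ennreal (t * (norm (y - y'))\<^sup>2) + ennreal (1 / t) *
       (if y = \<alpha> then \<infinity> else ennreal (1 / (norm (y - \<alpha>))\<^sup>2))"
proof (cases "y = \<alpha>")
  case True
  then show ?thesis using t by (simp add: ennreal_mult_top)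
next
  case False
  define n where "n = norm (y - \<alpha>)"
  define d where "d = norm (y - y')"
  have n: "n > 0" using False by (simp add: n_def)
  have "norm ((1 / norm (y - \<alpha>)) *\<^sub>R (y - \<alpha>) - (1 / norm (y' - \<alpha>)) *\<^sub>R (y' - \<alpha>))
       \<le> 2 * d / n"
    using unit_diff_bound[of "y - \<alpha>" "y' - \<alpha>"] False by (simp add: n_def d_def)
  also have "\<dots> \<le> t * d\<^sup>2 + (1 / t) * (1 / n\<^sup>2)"
  proof -
    have "0 \<le> (1/t) * (t * d - 1 / n)\<^sup>2" using t by simp
    also have "(1/t) * (t * d - 1 / n)\<^sup>2 = t * d\<^sup>2 + (1 / t) * (1 / n\<^sup>2) - 2 * d / n"
      using t n by (simp add: power2_eq_square field_simps)
    finally show ?thesis by simp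
  qed
  finally have r: "norm ((1 / norm (y - \<alpha>)) *\<^sub>R (y - \<alpha>) - (1 / norm (y' - \<alpha>)) *\<^sub>R (y' - \<alpha>))
       \<le> t * d\<^sup>2 + (1 / t) * (1 / n\<^sup>2)" .
  have "ennreal (t * d\<^sup>2) + ennreal (1 / t) * ennreal (1 / n\<^sup>2) = ennreal (t * d\<^sup>2 + (1 / t) * (1 / n\<^sup>2))"
    using t by (simp add: ennreal_mult[symmetric] ennreal_plus)
  then have "ennreal (norm ((1 / norm (y - \<alpha>)) *\<^sub>R (y - \<alpha>) - (1 / norm (y' - \<alpha>)) *\<^sub>R (y' - \<alpha>)))
     \<le> ennreal (t * d\<^sup>2) + ennreal (1 / t) * ennreal (1 / n\<^sup>2)"
    using ennreal_leI[OF r] by simp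
  then show ?thesis unfolding if_not_P[OF False] n_def d_def .

qed

lemma norm_integral_le_nn:
  fixes f :: "'b \<Rightarrow> 'a::{banach, second_countable_topology}"
  shows "norm (integral\<^sup>L M f) \<le> (\<integral>\<^sup>+x. norm (f x) \<partial>M)"
  by (cases "integrable M f") (auto simp: integral_norm_bound_ennreal not_integrable_integral_eq)

lemma u_meas: "(\<lambda>y::'a::{real_normed_vector, second_countable_topology}. (1 / norm (y - \<alpha>)) *\<^sub>R (y - \<alpha>)) \<in> borel_measurable borel"
  by measurable

lemma g_meas: "(\<lambda>y::'a::{real_normed_vector, second_countable_topology}. if y = \<alpha> then \<infinity> else ennreal (1 / (norm (y - \<alpha>))\<^sup>2)) \<in> borel_measurable borel"
  by measurable


lemma sq_sum_bound:
  fixes p q :: real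
  shows "(p + q)\<^sup>2 \<le> 2 * p\<^sup>2 + 2 * q\<^sup>2"
proof -
  have "0 \<le> (p - q)\<^sup>2" by simp
  then show ?thesis by (simp add: power2_eq_square algebra_simps)
qed

lemma norm_diff_sq_bound:
  fixes x y :: "'a::real_normed_vector"
  shows "(norm (x - y))\<^sup>2 \<le> 2 * (norm x)\<^sup>2 + 2 * (norm y)\<^sup>2"
proof -
  have "(norm (x - y))\<^sup>2 \<le> (norm x + norm y)\<^sup>2"
    by (rule power_mono[OF norm_triangle_ineq4]) simp
  also have "\<dots> \<le> 2 * (norm x)\<^sup>2 + 2 * (norm y)\<^sup>2" by (rule sq_sum_bound)
  finally show ?thesis .
qed

lemma coupling_bound:
  fixes M N :: "'a::{banach, second_countable_topology} measure"
  assumes M: "finite_second_moment M" and N: "finite_second_moment N"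
    and pi: "\<pi> \<in> couplings M N"
    and G: "(\<integral>\<^sup>+y. (if y = \<alpha> then \<infinity> else ennreal (1 / (norm (y - \<alpha>))\<^sup>2)) \<partial>M) \<le> ennreal C"
    and C: "C \<ge> 0" and t: "t > 0"
  shows "norm ((\<integral>y. (1 / norm (y - \<alpha>)) *\<^sub>R (y - \<alpha>) \<partial>M) - (\<integral>y. (1 / norm (y - \<alpha>)) *\<^sub>R (y - \<alpha>) \<partial>N))
    \<le> t * (\<integral>z. (norm (fst z - snd z))\<^sup>2 \<partial>\<pi>) + C / t"
proof -
  from pi have P: "prob_space \<pi>" "sets \<pi> = sets (borel \<Otimes>\<^sub>M borel)"
      "distr \<pi> borel fst = M" "distr \<pi> borel snd = N"
    by (auto simp: couplings_def)
  interpret prob_space \<pi> by (rule P(1))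
  have mf: "fst \<in> measurable \<pi> (borel :: 'a measure)"
    unfolding measurable_cong_sets[OF P(2) refl] by (rule measurable_fst)
  have ms: "snd \<in> measurable \<pi> (borel :: 'a measure)"
    unfolding measurable_cong_sets[OF P(2) refl] by (rule measurable_snd)
  define u where "u = (\<lambda>y::'a. (1 / norm (y - \<alpha>)) *\<^sub>R (y - \<alpha>))"
  define g where "g = (\<lambda>y::'a. if y = \<alpha> then \<infinity> else ennreal (1 / (norm (y - \<alpha>))\<^sup>2))"
  define d where "d = (\<lambda>z::'a\<times>'a. (norm (fst z - snd z))\<^sup>2)"
  have um: "u \<in> borel_measurable borel" unfolding u_def by (rule u_meas)
  have gm: "g \<in> borel_measurable borel" unfolding g_def by (rule g_meas)
  have ufm: "(\<lambda>z. u (fst z)) \<in> borel_measurable \<pi>" by (rule measurable_compose[OF mf um])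
  have usm: "(\<lambda>z. u (snd z)) \<in> borel_measurable \<pi>" by (rule measurable_compose[OF ms um])
  have gfm: "(\<lambda>z. g (fst z)) \<in> borel_measurable \<pi>" by (rule measurable_compose[OF mf gm])
  have dm: "d \<in> borel_measurable \<pi>"
    unfolding measurable_cong_sets[OF P(2) refl] d_def by measurable
  have IM: "integral\<^sup>L M u = (\<integral>z. u (fst z) \<partial>\<pi>)"
    using integral_distr[OF mf um] P(3) by simp
  have IN: "integral\<^sup>L N u = (\<integral>z. u (snd z) \<partial>\<pi>)"
    using integral_distr[OF ms um] P(4) by simp
  have int1: "integrable \<pi> (\<lambda>z. u (fst z))"
    by (rule integrable_const_bound[where B=1]) (auto simp: u_def unit_norm_le1 intro: ufm[unfolded u_def])
  have int2: "integrable \<pi> (\<lambda>z. u (snd z))"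
    by (rule integrable_const_bound[where B=1]) (auto simp: u_def unit_norm_le1 intro: usm[unfolded u_def])
  have sqm: "(\<lambda>y::'a. (norm y)\<^sup>2) \<in> borel_measurable borel" by measurable
  have iM: "integrable \<pi> (\<lambda>z. (norm (fst z))\<^sup>2)"
    using integrable_distr_eq[OF mf sqm] M P(3) by (simp add: finite_second_moment_def)
  have iN: "integrable \<pi> (\<lambda>z. (norm (snd z))\<^sup>2)"
    using integrable_distr_eq[OF ms sqm] N P(4) by (simp add: finite_second_moment_def)
  have id: "integrable \<pi> d"
  proof (rule Bochner_Integration.integrable_bound[OF _ dm])
    show "integrable \<pi> (\<lambda>z. 2 * (norm (fst z))\<^sup>2 + 2 * (norm (snd z))\<^sup>2)"
      using iM iN by auto
    show "AE z in \<pi>. norm (d z) \<le> norm (2 * (norm (fst z))\<^sup>2 + 2 * (norm (snd z))\<^sup>2)"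
      by (auto simp: d_def norm_diff_sq_bound)
  qed
  define D where "D = integral\<^sup>L \<pi> d"
  have D0: "D \<ge> 0" unfolding D_def d_def by (rule Bochner_Integration.integral_nonneg) auto
  have "integral\<^sup>L M u - integral\<^sup>L N u = (\<integral>z. u (fst z) - u (snd z) \<partial>\<pi>)"
    by (simp add: IM IN Bochner_Integration.integral_diff[OF int1 int2])
  then have "ennreal (norm (integral\<^sup>L M u - integral\<^sup>L N u)) \<le> (\<integral>\<^sup>+z. norm (u (fst z) - u (snd z)) \<partial>\<pi>)"
    by (simp add: norm_integral_le_nn)
  also have "\<dots> \<le> (\<integral>\<^sup>+z. ennreal (t * d z) + ennreal (1 / t) * g (fst z) \<partial>\<pi>)"
    by (rule nn_integral_mono) (simp add: u_def g_def d_def pointwise_enn[OF t])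
  also have "\<dots> = (\<integral>\<^sup>+z. ennreal (t * d z) \<partial>\<pi>) + ennreal (1 / t) * (\<integral>\<^sup>+z. g (fst z) \<partial>\<pi>)"
    using dm gfm by (simp add: nn_integral_add nn_integral_cmult)
  also have "(\<integral>\<^sup>+z. ennreal (t * d z) \<partial>\<pi>) = ennreal (t * D)"
    using id t unfolding D_def
    by (subst nn_integral_eq_integral) (auto simp: d_def)
  also have "(\<integral>\<^sup>+z. g (fst z) \<partial>\<pi>) = integral\<^sup>N M g"
  proof -
    have sM: "sets M = sets borel" using M by (simp add: finite_second_moment_def)
    have gM: "g \<in> borel_measurable M" using gm unfolding measurable_cong_sets[OF sM refl] .
    show ?thesis using nn_integral_distr[OF mf, of g] gM P(3) by simp
  qed
  also have "ennreal (t * D) + ennreal (1 / t) * integral\<^sup>N M g \<le> ennreal (t * D) + ennreal (1 / t) * ennreal C"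
    using G unfolding g_def by (intro add_left_mono mult_left_mono) auto
  also have "\<dots> = ennreal (t * D + C / t)"
    using t C D0 by (simp add: ennreal_mult[symmetric] ennreal_plus)
  finally have "norm (integral\<^sup>L M u - integral\<^sup>L N u) \<le> t * D + C / t"
    using t C D0 by (subst (asm) ennreal_le_iff) auto
  then show ?thesis unfolding u_def D_def d_def by simp
qed
lemma product_coupling:
  fixes M N :: "'a::{banach, second_countable_topology} measure"
  assumes M: "finite_second_moment M" and N: "finite_second_moment N"
  shows "M \<Otimes>\<^sub>M N \<in> couplings M N"
proof -
  have pM: "prob_space M" and sM: "sets M = sets borel" using M by (auto simp: finite_second_moment_def)
  have pN: "prob_space N" and sN: "sets N = sets borel" using N by (auto simp: finite_second_moment_def)
  interpret M: prob_space M by (rule pM)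
  interpret N: prob_space N by (rule pN)
  interpret pair_prob_space M N ..
  have spM: "space M = UNIV" using sets_eq_imp_space_eq[OF sM] by simp
  have spN: "space N = UNIV" using sets_eq_imp_space_eq[OF sN] by simp
  have s: "sets (M \<Otimes>\<^sub>M N) = sets (borel \<Otimes>\<^sub>M borel)" by (rule sets_pair_measure_cong[OF sM sN])
  have mf: "fst \<in> measurable (M \<Otimes>\<^sub>M N) (borel :: 'a measure)"
    unfolding measurable_cong_sets[OF s refl] by (rule measurable_fst)
  have ms: "snd \<in> measurable (M \<Otimes>\<^sub>M N) (borel :: 'a measure)"
    unfolding measurable_cong_sets[OF s refl] by (rule measurable_snd)
  have d1: "distr (M \<Otimes>\<^sub>M N) borel fst = M"
  proof (rule measure_eqI)
    show "sets (distr (M \<Otimes>\<^sub>M N) borel fst) = sets M" using sM by simp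
    fix A assume A: "A \<in> sets (distr (M \<Otimes>\<^sub>M N) borel fst)"
    then have AM: "A \<in> sets M" using sM by simp
    have "emeasure (distr (M \<Otimes>\<^sub>M N) borel fst) A = emeasure (M \<Otimes>\<^sub>M N) (fst -` A \<inter> space (M \<Otimes>\<^sub>M N))"
      using A mf by (simp add: emeasure_distr)
    also have "fst -` A \<inter> space (M \<Otimes>\<^sub>M N) = A \<times> space N"
      by (auto simp: space_pair_measure spM spN)
    also have "emeasure (M \<Otimes>\<^sub>M N) (A \<times> space N) = emeasure M A"
      using AM by (simp add: N.emeasure_pair_measure_Times N.emeasure_space_1)
    finally show "emeasure (distr (M \<Otimes>\<^sub>M N) borel fst) A = emeasure M A" .
  qed
  have d2: "distr (M \<Otimes>\<^sub>M N) borel snd = N"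
  proof (rule measure_eqI)
    show "sets (distr (M \<Otimes>\<^sub>M N) borel snd) = sets N" using sN by simp
    fix A assume A: "A \<in> sets (distr (M \<Otimes>\<^sub>M N) borel snd)"
    then have AN: "A \<in> sets N" using sN by simp
    have "emeasure (distr (M \<Otimes>\<^sub>M N) borel snd) A = emeasure (M \<Otimes>\<^sub>M N) (snd -` A \<inter> space (M \<Otimes>\<^sub>M N))"
      using A ms by (simp add: emeasure_distr)
    also have "snd -` A \<inter> space (M \<Otimes>\<^sub>M N) = space M \<times> A"
      by (auto simp: space_pair_measure spM spN)
    also have "emeasure (M \<Otimes>\<^sub>M N) (space M \<times> A) = emeasure N A"
      using AN by (simp add: N.emeasure_pair_measure_Times M.emeasure_space_1)
    finally show "emeasure (distr (M \<Otimes>\<^sub>M N) borel snd) A = emeasure N A" .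
  qed
  have "prob_space (M \<Otimes>\<^sub>M N)" by (rule P.prob_space_axioms)
  then show ?thesis using s d1 d2 by (simp add: couplings_def)
qed

lemma W2_bound:
  fixes M N :: "'a::{banach, second_countable_topology} measure"
  assumes M: "finite_second_moment M" and N: "finite_second_moment N"
    and G: "(\<integral>\<^sup>+y. (if y = \<alpha> then \<infinity> else ennreal (1 / (norm (y - \<alpha>))\<^sup>2)) \<partial>M) \<le> ennreal C"
    and C: "C > 0"
  shows "norm ((\<integral>y. (1 / norm (y - \<alpha>)) *\<^sub>R (y - \<alpha>) \<partial>M) - (\<integral>y. (1 / norm (y - \<alpha>)) *\<^sub>R (y - \<alpha>) \<partial>N))
    \<le> 2 * sqrt C * W2 M N"
proof -
  define c where "c = norm ((\<integral>y. (1 / norm (y - \<alpha>)) *\<^sub>R (y - \<alpha>) \<partial>M) - (\<integral>y. (1 / norm (y - \<alpha>)) *\<^sub>R (y - \<alpha>) \<partial>N))"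
  define S where "S = (\<lambda>\<pi>. \<integral>z. (norm (fst z - snd z))\<^sup>2 \<partial>\<pi>) ` couplings M N"
  define I where "I = Inf S"
  have ne: "S \<noteq> {}" unfolding S_def using product_coupling[OF M N] by blast
  have I0: "0 \<le> I" unfolding I_def
    by (rule cInf_greatest[OF ne]) (auto simp: S_def)
  have W: "W2 M N = sqrt I" by (simp add: W2_def I_def S_def)
  have key: "c \<le> t * I + C / t" if t: "t > 0" for t
  proof -
    have "(c - C / t) / t \<le> I" unfolding I_def
    proof (rule cInf_greatest[OF ne])
      fix s assume "s \<in> S"
      then obtain \<pi> where pi: "\<pi> \<in> couplings M N" and s: "s = (\<integral>z. (norm (fst z - snd z))\<^sup>2 \<partial>\<pi>)"
        unfolding S_def by blast
      have "c \<le> t * s + C / t" unfolding c_def s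
        by (rule coupling_bound[OF M N pi G]) (use C t in auto)
      then show "(c - C / t) / t \<le> s" using t by (simp add: pos_divide_le_eq algebra_simps)
    qed
    then show ?thesis using t by (simp add: pos_divide_le_eq algebra_simps)
  qed
  show ?thesis
  proof (cases "I = 0")
    case True
    have "c \<le> 0"
    proof (rule ccontr)
      assume "\<not> c \<le> 0"
      then have c0: "c > 0" by simp
      have "c \<le> (2 * C / c) * I + C / (2 * C / c)" by (rule key) (use c0 C in simp)
      also have "\<dots> = c / 2" using True c0 C by simp
      finally show False using c0 by simp
    qed
    then show ?thesis using True W by (simp add: c_def)
  next
    case False
    then have Ip: "I > 0" using I0 by simp
    define a where "a = sqrt C"
    define b where "b = sqrt I"
    have a: "a > 0" and b: "b > 0" using C Ip by (auto simp: a_def b_def)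
    have Ca: "C = a * a" using C by (simp add: a_def)
    have Ib: "I = b * b" using I0 by (simp add: b_def)
    have "c \<le> (a / b) * I + C / (a / b)" by (rule key) (use a b in simp)
    also have "\<dots> = 2 * a * b" using a b unfolding Ca Ib by (simp add: field_simps)
    finally show ?thesis using W by (simp add: c_def a_def b_def)
  qed
qed
theorem mainTheorem5:
  fixes p :: "real \<Rightarrow> real"
    and \<mu> :: "real \<Rightarrow> 'a::{real_inner, banach, second_countable_topology} measure"
    and \<beta> C2 C4 C6 :: real
  assumes p_meas: "p \<in> borel_measurable lborel"
    and p_nonneg: "\<And>x. p x \<ge> 0"
    and p_dens: "(\<integral>\<^sup>+x. ennreal (p x) \<partial>lborel) = 1"
    and A2_bdd: "\<exists>B. \<forall>x. \<bar>p x\<bar> \<le> B"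
    and A2_beta: "\<beta> > 0" and A2_C2: "C2 > 0"
    and A2_hoelder: "\<And>x x'. \<bar>p x - p x'\<bar> \<le> C2 * \<bar>x - x'\<bar> powr \<beta>"
    and A4_mom: "\<And>x. finite_second_moment (\<mu> x)"
    and A4_W2: "\<And>x x'. W2 (\<mu> x) (\<mu> x') \<le> C4 * \<bar>x - x'\<bar> powr \<beta>"
    and A6: "\<And>\<alpha> x. (\<integral>\<^sup>+y. (if y = \<alpha> then \<infinity> else ennreal (1 / (norm (y - \<alpha>))\<^sup>2)) \<partial>(\<mu> x))
                      \<le> ennreal C6"
  shows "\<exists>C3 > 0. \<forall>x x' \<alpha>. norm (Phi p \<mu> x \<alpha> - Phi p \<mu> x' \<alpha>) \<le> C3 * \<bar>x - x'\<bar> powr \<beta>"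
proof -
  obtain B where B: "\<And>x. \<bar>p x\<bar> \<le> B" using A2_bdd by blast
  define B' where "B' = max B 0"
  define C where "C = max C6 1"
  define K where "K = 2 * sqrt C"
  have C: "C > 0" by (simp add: C_def)
  have K: "K \<ge> 0" using C by (simp add: K_def)
  have B': "B' \<ge> 0" "\<And>x. \<bar>p x\<bar> \<le> B'" using B by (auto simp: B'_def intro: order_trans[OF B max.cobounded1])
  define C3 where "C3 = C2 + B' * K * \<bar>C4\<bar>"
  have C3: "C3 > 0" using A2_C2 B'(1) K unfolding C3_def by (simp add: add_pos_nonneg)
  show ?thesis
  proof (intro exI[of _ C3] conjI allI)
    show "C3 > 0" by (rule C3)
    fix x x' :: real and \<alpha> :: 'a
    define E where "E = (\<lambda>x. \<integral>y. (1 / norm (y - \<alpha>)) *\<^sub>R (y - \<alpha>) \<partial>\<mu> x)"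
    define d where "d = \<bar>x - x'\<bar> powr \<beta>"
    have d: "d \<ge> 0" by (simp add: d_def)
    have G: "(\<integral>\<^sup>+y. (if y = \<alpha> then \<infinity> else ennreal (1 / (norm (y - \<alpha>))\<^sup>2)) \<partial>(\<mu> x)) \<le> ennreal C"
      using A6[where \<alpha>=\<alpha> and x=x] by (rule order_trans) (rule ennreal_leI, simp add: C_def)
    have Ex: "norm (E x) \<le> 1"
    proof -
      interpret prob_space "\<mu> x" using A4_mom[of x] by (simp add: finite_second_moment_def)
      have "ennreal (norm (E x)) \<le> (\<integral>\<^sup>+y. norm ((1 / norm (y - \<alpha>)) *\<^sub>R (y - \<alpha>)) \<partial>\<mu> x)"
        unfolding E_def by (rule norm_integral_le_nn)
      also have "\<dots> \<le> (\<integral>\<^sup>+y. 1 \<partial>\<mu> x)"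
        by (rule nn_integral_mono) (simp add: unit_norm_le1 del: norm_scaleR)
      also have "\<dots> = 1" by (simp add: emeasure_space_1)
      finally show ?thesis by simp
    qed
    have EW: "norm (E x - E x') \<le> K * W2 (\<mu> x) (\<mu> x')"
      unfolding E_def K_def by (rule W2_bound[OF A4_mom A4_mom G C])
    have Phi_eq: "Phi p \<mu> x \<alpha> - Phi p \<mu> x' \<alpha> = - ((p x - p x') *\<^sub>R E x + p x' *\<^sub>R (E x - E x'))"
    proof -
      have PE: "Phi p \<mu> z \<alpha> = - (p z *\<^sub>R E z)" for z by (simp add: Phi_def E_def)
      show ?thesis unfolding PE by (simp add: scaleR_diff_left scaleR_diff_right)
    qed
    have tri: "norm (Phi p \<mu> x \<alpha> - Phi p \<mu> x' \<alpha>) \<le> norm ((p x - p x') *\<^sub>R E x) + norm (p x' *\<^sub>R (E x - E x'))"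
      unfolding Phi_eq norm_minus_cancel by (rule norm_triangle_ineq)
    have h1: "norm ((p x - p x') *\<^sub>R E x) \<le> C2 * d"
    proof -
      have "norm ((p x - p x') *\<^sub>R E x) = \<bar>p x - p x'\<bar> * norm (E x)" by simp
      also have "\<dots> \<le> \<bar>p x - p x'\<bar> * 1" by (rule mult_left_mono[OF Ex]) simp
      also have "\<dots> \<le> C2 * d" using A2_hoelder[of x x'] by (simp add: d_def)
      finally show ?thesis .
    qed
    have h2: "norm (p x' *\<^sub>R (E x - E x')) \<le> B' * K * \<bar>C4\<bar> * d"
    proof -
      have "norm (p x' *\<^sub>R (E x - E x')) = \<bar>p x'\<bar> * norm (E x - E x')" by simp
      also have "\<dots> \<le> B' * (K * W2 (\<mu> x) (\<mu> x'))"
        by (rule mult_mono[OF B'(2) EW]) (use B' in auto)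
      also have "\<dots> \<le> B' * (K * (\<bar>C4\<bar> * d))"
      proof -
        have "W2 (\<mu> x) (\<mu> x') \<le> C4 * d" using A4_W2[of x x'] by (simp add: d_def)
        also have "C4 * d \<le> \<bar>C4\<bar> * d" by (rule mult_right_mono[OF abs_ge_self d])
        finally have "W2 (\<mu> x) (\<mu> x') \<le> \<bar>C4\<bar> * d" .
        then show ?thesis using B' K by (intro mult_left_mono) auto
      qed
      finally show ?thesis by (simp add: mult.assoc)
    qed
    have fin: "norm (Phi p \<mu> x \<alpha> - Phi p \<mu> x' \<alpha>) \<le> C2 * d + B' * K * \<bar>C4\<bar> * d"
      using tri h1 h2 by linarith
    show "norm (Phi p \<mu> x \<alpha> - Phi p \<mu> x' \<alpha>) \<le> C3 * \<bar>x - x'\<bar> powr \<beta>"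
      unfolding d_def[symmetric] C3_def using fin by (simp add: distrib_right)
  qed
qed

end
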